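(* Assume $a/b>\sqrt2$ and let $u$ satisfy $|u|<u_{\max}$. Then the four vertices $P_1,P_2,P_3,P_4$ of the self-intersected 4-periodic with parameter $u$ and the two foci $f_1=(-c,0)$, $f_2=(c,0)$ lie on the circle with center $$C=\left(0,\ \frac{c^2u^2-a^2+2b^2}{2b\sqrt{1-u^2}}\right)\quad\text{and radius}\quad R=\frac{a^2-c^2u^2}{2b\sqrt{1-u^2}}.$$ Moreover, whenever $a^2+(u^2-2)c^2\neq 0$, the four vertices of the outer polygon and the two foci lie on the circle with center $$C'=\left(0,\ -\frac{2bc^2\sqrt{1-u^2}}{a^2+(u^2-2)c^2}\right)\quad\text{and radius}\quad |R'|,\qquad R'=\frac{c\,(c^2u^2-a^2)}{a^2+(u^2-2)c^2}.$$
   Context: The elliptic billiard is $\mathcal{E}: x^2/a^2+y^2/b^2=1$, $a>b>0$, $c=\sqrt{a^2-b^2}$, foci $f_1=(-c,0)$, $f_2=(c,0)$. For $a/b>\sqrt2$ the self-intersected 4-periodics (closed 4-bounce billiard trajectories tangent to the confocal hyperbola $x^2/a''^2-y^2/b''^2=1$, $a''=a\sqrt{a^2-2b^2}/c$, $b''=b^2/c$) are parametrized by $u$ with $|u|\le u_{\max}:=\frac{a}{c^2}\sqrt{a^2-2b^2}$: $P_1=(au,\,b\sqrt{1-u^2})$, $P_3=(-au,\,b\sqrt{1-u^2})$, $P_2=\left(-\frac{a\sqrt{a^2(a^2-2b^2)-c^4u^2}}{c^2\sqrt{1-u^2}},\,-\frac{b^3}{c^2\sqrt{1-u^2}}\right)$,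 $P_4=\left(\frac{a\sqrt{a^2(a^2-2b^2)-c^4u^2}}{c^2\sqrt{1-u^2}},\,-\frac{b^3}{c^2\sqrt{1-u^2}}\right)$. The outer polygon has vertices $P_i'$, $i=1,\dots,4$, where $P_i'$ is the intersection point of the tangent lines to $\mathcal{E}$ at $P_i$ and at $P_{i+1}$ (indices mod 4). *)

theory Defs
  imports Complex_Main
begin

text \<open>Elliptic billiard x^2/a^2 + y^2/b^2 = 1, a > b > 0, c = sqrt(a^2 - b^2).\<close>

definition foc :: "real \<Rightarrow> real \<Rightarrow> real" where
  "foc a b = sqrt (a\<^sup>2 - b\<^sup>2)"

definition umax :: "real \<Rightarrow> real \<Rightarrow> real" where
  "umax a b = a / (foc a b)\<^sup>2 * sqrt (a\<^sup>2 - 2 * b\<^sup>2)"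

definition P1 :: "real \<Rightarrow> real \<Rightarrow> real \<Rightarrow> real \<times> real" where
  "P1 a b u = (a * u, b * sqrt (1 - u\<^sup>2))"

definition P3 :: "real \<Rightarrow> real \<Rightarrow> real \<Rightarrow> real \<times> real" where
  "P3 a b u = (- a * u, b * sqrt (1 - u\<^sup>2))"

definition P2 :: "real \<Rightarrow> real \<Rightarrow> real \<Rightarrow> real \<times> real" where
  "P2 a b u = (let c = foc a b in
     (- (a * sqrt (a\<^sup>2 * (a\<^sup>2 - 2 * b\<^sup>2) - c^4 * u\<^sup>2)) / (c\<^sup>2 * sqrt (1 - u\<^sup>2)),
      - (b^3) / (c\<^sup>2 * sqrt (1 - u\<^sup>2))))"

definition P4 :: "real \<Rightarrow> real \<Rightarrow> real \<Rightarrow> real \<times> real" where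
  "P4 a b u = (let c = foc a b in
     ((a * sqrt (a\<^sup>2 * (a\<^sup>2 - 2 * b\<^sup>2) - c^4 * u\<^sup>2)) / (c\<^sup>2 * sqrt (1 - u\<^sup>2)),
      - (b^3) / (c\<^sup>2 * sqrt (1 - u\<^sup>2))))"

definition tangent_line :: "real \<Rightarrow> real \<Rightarrow> real \<times> real \<Rightarrow> (real \<times> real) set" where
  "tangent_line a b p = {q. fst q * fst p / a\<^sup>2 + snd q * snd p / b\<^sup>2 = 1}"

definition tangent_meet :: "real \<Rightarrow> real \<Rightarrow> real \<times> real \<Rightarrow> real \<times> real \<Rightarrow> real \<times> real" where
  "tangent_meet a b p q = (THE r. r \<in> tangent_line a b p \<and> r \<in> tangent_line a b q)"

definition P1' :: "real \<Rightarrow> real \<Rightarrow> real \<Rightarrow> real \<times> real" where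
  "P1' a b u = tangent_meet a b (P1 a b u) (P2 a b u)"
definition P2' :: "real \<Rightarrow> real \<Rightarrow> real \<Rightarrow> real \<times> real" where
  "P2' a b u = tangent_meet a b (P2 a b u) (P3 a b u)"
definition P3' :: "real \<Rightarrow> real \<Rightarrow> real \<Rightarrow> real \<times> real" where
  "P3' a b u = tangent_meet a b (P3 a b u) (P4 a b u)"
definition P4' :: "real \<Rightarrow> real \<Rightarrow> real \<Rightarrow> real \<times> real" where
  "P4' a b u = tangent_meet a b (P4 a b u) (P1 a b u)"

definition on_circle :: "real \<times> real \<Rightarrow> real \<Rightarrow> real \<times> real \<Rightarrow> bool" where
  "on_circle C R p \<longleftrightarrow> (fst p - fst C)\<^sup>2 + (snd p - snd C)\<^sup>2 = R\<^sup>2"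

end

theory Submission imports Defs begin

lemma tangent_meet_eq:
  assumes "a \<noteq> 0" "b \<noteq> 0" "fst p * snd q - snd p * fst q \<noteq> 0"
    "r \<in> tangent_line a b p" "r \<in> tangent_line a b q"
  shows "tangent_meet a b p q = r"
  unfolding tangent_meet_def
proof (rule the_equality)
  show "r \<in> tangent_line a b p \<and> r \<in> tangent_line a b q" using assms by auto
next
  fix r' assume h: "r' \<in> tangent_line a b p \<and> r' \<in> tangent_line a b q"
  obtain x y where r: "r = (x,y)" by force
  obtain x' y' where r': "r' = (x',y')" by force
  obtain p1 p2 where p: "p = (p1,p2)" by force
  obtain q1 q2 where q: "q = (q1,q2)" by force
  have h1: "x * p1 / a\<^sup>2 + y * p2 / b\<^sup>2 = 1" "x' * p1 / a\<^sup>2 + y' * p2 / b\<^sup>2 = 1"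
    "x * q1 / a\<^sup>2 + y * q2 / b\<^sup>2 = 1" "x' * q1 / a\<^sup>2 + y' * q2 / b\<^sup>2 = 1"
    using h assms(4,5) unfolding r r' p q tangent_line_def by auto
  have d: "p1 * q2 - p2 * q1 \<noteq> 0" using assms(3) p q by simp
  define X where "X = (x - x') / a\<^sup>2"
  define Y where "Y = (y - y') / b\<^sup>2"
  have f1: "X * p1 + Y * p2 = 0"
  proof -
    have "X * p1 + Y * p2 = (x * p1 / a\<^sup>2 + y * p2 / b\<^sup>2) - (x' * p1 / a\<^sup>2 + y' * p2 / b\<^sup>2)"
      using assms(1,2) unfolding X_def Y_def by (simp add: field_simps)
    then show ?thesis using h1 by simp
  qed
  have f2: "X * q1 + Y * q2 = 0"
  proof -
    have "X * q1 + Y * q2 = (x * q1 / a\<^sup>2 + y * q2 / b\<^sup>2) - (x' * q1 / a\<^sup>2 + y' * q2 / b\<^sup>2)"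
      using assms(1,2) unfolding X_def Y_def by (simp add: field_simps)
    then show ?thesis using h1 by simp
  qed
  have "X * (p1 * q2 - p2 * q1) = 0"
    proof -
    have "X * (p1 * q2 - p2 * q1) = q2 * (X * p1 + Y * p2) - p2 * (X * q1 + Y * q2)" by (simp add: algebra_simps)
    then show ?thesis using f1 f2 by simp
  qed
  hence X0: "X = 0" using d by simp
  have "Y * (p1 * q2 - p2 * q1) = 0"
    proof -
    have "Y * (p1 * q2 - p2 * q1) = p1 * (X * q1 + Y * q2) - q1 * (X * p1 + Y * p2)" by (simp add: algebra_simps)
    then show ?thesis using f1 f2 by simp
  qed
  hence Y0: "Y = 0" using d by simp
  show "r' = r" using X0 Y0 assms(1,2) unfolding X_def Y_def r r' by simp
qed

lemma meet_gen:
  fixes a b c u s w :: real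
  assumes a: "a > 0" and b: "b > 0" and c: "c > 0" and cc: "c\<^sup>2 = a\<^sup>2 - b\<^sup>2"
    and s: "s > 0" and ss: "s\<^sup>2 = 1 - u\<^sup>2" and ww: "w\<^sup>2 = c^4 * s\<^sup>2 - b^4"
    and D: "b\<^sup>2 - c\<^sup>2 * s\<^sup>2 \<noteq> 0"
  shows "tangent_meet a b (a * u, b * s) (- (a * w) / (c\<^sup>2 * s), - (b^3) / (c\<^sup>2 * s))
       = (a * (w * s + b\<^sup>2 * u) / (b\<^sup>2 - c\<^sup>2 * s\<^sup>2), b * (s * (b\<^sup>2 - c\<^sup>2) - u * w) / (b\<^sup>2 - c\<^sup>2 * s\<^sup>2))"
proof (rule tangent_meet_eq)
  define D where "D = b\<^sup>2 - c\<^sup>2 * s\<^sup>2"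
  have D0: "D \<noteq> 0" using D D_def by simp
  show "a \<noteq> 0" "b \<noteq> 0" using a b by auto
  have prod: "(w * s - b\<^sup>2 * u) * (w * s + b\<^sup>2 * u) = (c\<^sup>2 * s\<^sup>2 - b\<^sup>2) * (c\<^sup>2 * s\<^sup>2 + b\<^sup>2)"
  proof -
    have "(w * s - b\<^sup>2 * u) * (w * s + b\<^sup>2 * u) = w\<^sup>2 * s\<^sup>2 - b^4 * u\<^sup>2" by algebra
    also have "\<dots> = (c^4 * s\<^sup>2 - b^4) * s\<^sup>2 - b^4 * (1 - s\<^sup>2)" using ww ss by simp
    also have "\<dots> = (c\<^sup>2 * s\<^sup>2 - b\<^sup>2) * (c\<^sup>2 * s\<^sup>2 + b\<^sup>2)" by algebra
    finally show ?thesis .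
  qed
  have pos: "c\<^sup>2 * s\<^sup>2 + b\<^sup>2 > 0" using b by (simp add: add_nonneg_pos)
  have "w * s - b\<^sup>2 * u \<noteq> 0" using prod D pos by auto
  then show "fst (a * u, b * s) * snd (- (a * w) / (c\<^sup>2 * s), - (b^3) / (c\<^sup>2 * s)) -
    snd (a * u, b * s) * fst (- (a * w) / (c\<^sup>2 * s), - (b^3) / (c\<^sup>2 * s)) \<noteq> 0"
    using a b c s by (simp add: field_simps power2_eq_square power3_eq_cube)
  show "(a * (w * s + b\<^sup>2 * u) / (b\<^sup>2 - c\<^sup>2 * s\<^sup>2), b * (s * (b\<^sup>2 - c\<^sup>2) - u * w) / (b\<^sup>2 - c\<^sup>2 * s\<^sup>2))
    \<in> tangent_line a b (a * u, b * s)"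
  proof -
    have "a * (w * s + b\<^sup>2 * u) / D * (a * u) / a\<^sup>2 + b * (s * (b\<^sup>2 - c\<^sup>2) - u * w) / D * (b * s) / b\<^sup>2
      = (b\<^sup>2 * (u\<^sup>2 + s\<^sup>2) - c\<^sup>2 * s\<^sup>2) / D"
      using a b D0 by (simp add: field_simps power2_eq_square)
    also have "\<dots> = 1" using ss D0 unfolding D_def by simp
    finally show ?thesis unfolding tangent_line_def D_def by simp
  qed
  show "(a * (w * s + b\<^sup>2 * u) / (b\<^sup>2 - c\<^sup>2 * s\<^sup>2), b * (s * (b\<^sup>2 - c\<^sup>2) - u * w) / (b\<^sup>2 - c\<^sup>2 * s\<^sup>2))
    \<in> tangent_line a b (- (a * w) / (c\<^sup>2 * s), - (b^3) / (c\<^sup>2 * s))"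
  proof -
    have "a * (w * s + b\<^sup>2 * u) / D * (- (a * w) / (c\<^sup>2 * s)) / a\<^sup>2 + b * (s * (b\<^sup>2 - c\<^sup>2) - u * w) / D * (- (b^3) / (c\<^sup>2 * s)) / b\<^sup>2
      = - (w\<^sup>2 * s + b^4 * s - b\<^sup>2 * c\<^sup>2 * s) / (D * c\<^sup>2 * s)"
      using a b c s D0 by (simp add: field_simps power2_eq_square power3_eq_cube power4_eq_xxxx)
    also have "w\<^sup>2 * s + b^4 * s - b\<^sup>2 * c\<^sup>2 * s = - D * c\<^sup>2 * s"
      unfolding D_def ww by algebra
    also have "- (- D * c\<^sup>2 * s) / (D * c\<^sup>2 * s) = 1" using D0 c s by simp
    finally show ?thesis unfolding tangent_line_def D_def by simp
  qed
qed

lemma circ_gen: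
  fixes a b c u s w :: real
  assumes a: "a > 0" and b: "b > 0" and c: "c > 0" and cc: "c\<^sup>2 = a\<^sup>2 - b\<^sup>2"
    and s: "s > 0" and ss: "s\<^sup>2 = 1 - u\<^sup>2" and ww: "w\<^sup>2 = c^4 * s\<^sup>2 - b^4"
    and D: "b\<^sup>2 - c\<^sup>2 * s\<^sup>2 \<noteq> 0"
  shows "on_circle (0, - (2 * b * c\<^sup>2 * s) / (a\<^sup>2 + (u\<^sup>2 - 2) * c\<^sup>2))
     \<bar>c * (c\<^sup>2 * u\<^sup>2 - a\<^sup>2) / (a\<^sup>2 + (u\<^sup>2 - 2) * c\<^sup>2)\<bar>
     (a * (w * s + b\<^sup>2 * u) / (b\<^sup>2 - c\<^sup>2 * s\<^sup>2), b * (s * (b\<^sup>2 - c\<^sup>2) - u * w) / (b\<^sup>2 - c\<^sup>2 * s\<^sup>2))"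
proof -
  define D where "D = b\<^sup>2 - c\<^sup>2 * s\<^sup>2"
  have D0: "D \<noteq> 0" using D D_def by simp
  have DD: "a\<^sup>2 + (u\<^sup>2 - 2) * c\<^sup>2 = D" unfolding D_def using cc ss by algebra
  have y: "b * (s * (b\<^sup>2 - c\<^sup>2) - u * w) / D - - (2 * b * c\<^sup>2 * s) / D = b * (s * a\<^sup>2 - u * w) / D"
  proof -
    have ab: "a\<^sup>2 = b\<^sup>2 + c\<^sup>2" using cc by simp
    show ?thesis using D0 by (simp add: field_simps ab)
  qed
  have num: "a\<^sup>2 * (w * s + b\<^sup>2 * u)\<^sup>2 + b\<^sup>2 * (s * a\<^sup>2 - u * w)\<^sup>2 = (a\<^sup>2 * s\<^sup>2 + b\<^sup>2 * u\<^sup>2) * (w\<^sup>2 + a\<^sup>2 * b\<^sup>2)"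
    by algebra
  have e1: "a\<^sup>2 * s\<^sup>2 + b\<^sup>2 * u\<^sup>2 = a\<^sup>2 - c\<^sup>2 * u\<^sup>2" using ss cc by algebra
  have e2: "w\<^sup>2 + a\<^sup>2 * b\<^sup>2 = c\<^sup>2 * (a\<^sup>2 - c\<^sup>2 * u\<^sup>2)"
  proof -
    have "w\<^sup>2 + a\<^sup>2 * b\<^sup>2 = c^4 * (1 - u\<^sup>2) - b^4 + a\<^sup>2 * b\<^sup>2" using ww ss by simp
    also have "\<dots> = c\<^sup>2 * (a\<^sup>2 - c\<^sup>2 * u\<^sup>2)"
    proof -
      have "a\<^sup>2 = c\<^sup>2 + b\<^sup>2" using cc by simp
      then show ?thesis by (simp add: algebra_simps power2_eq_square power4_eq_xxxx)
    qed
    finally show ?thesis .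
  qed
  have "(a * (w * s + b\<^sup>2 * u) / D)\<^sup>2 + (b * (s * a\<^sup>2 - u * w) / D)\<^sup>2
     = (a\<^sup>2 * (w * s + b\<^sup>2 * u)\<^sup>2 + b\<^sup>2 * (s * a\<^sup>2 - u * w)\<^sup>2) / D\<^sup>2"
    using D0 by (simp add: field_simps power2_eq_square)
  also have "\<dots> = c\<^sup>2 * (a\<^sup>2 - c\<^sup>2 * u\<^sup>2)\<^sup>2 / D\<^sup>2"
    unfolding num e1 e2 by (simp add: power2_eq_square)
  also have "\<dots> = (c * (c\<^sup>2 * u\<^sup>2 - a\<^sup>2) / D)\<^sup>2"
    by (simp add: power2_eq_square field_simps)
  finally have fin: "(a * (w * s + b\<^sup>2 * u) / D)\<^sup>2 + (b * (s * a\<^sup>2 - u * w) / D)\<^sup>2 = (c * (c\<^sup>2 * u\<^sup>2 - a\<^sup>2) / D)\<^sup>2" .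
  show ?thesis unfolding on_circle_def DD power2_abs using fin y unfolding D_def by simp
qed

lemma tangent_meet_sym: "tangent_meet a b p q = tangent_meet a b q p"
  unfolding tangent_meet_def by (simp add: conj_commute)

theorem mainTheorem3:
  fixes a b u :: real
  defines "c \<equiv> foc a b"
  assumes "a > b" and "b > 0" and "a / b > sqrt 2" and "\<bar>u\<bar> < umax a b"
  shows "(let C = (0, (c\<^sup>2 * u\<^sup>2 - a\<^sup>2 + 2 * b\<^sup>2) / (2 * b * sqrt (1 - u\<^sup>2)));
              R = (a\<^sup>2 - c\<^sup>2 * u\<^sup>2) / (2 * b * sqrt (1 - u\<^sup>2))
          in on_circle C R (P1 a b u) \<and> on_circle C R (P2 a b u) \<and>
             on_circle C R (P3 a b u) \<and> on_circle C R (P4 a b u) \<and>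
             on_circle C R (- c, 0) \<and> on_circle C R (c, 0))
       \<and> (a\<^sup>2 + (u\<^sup>2 - 2) * c\<^sup>2 \<noteq> 0 \<longrightarrow>
          (let C' = (0, - (2 * b * c\<^sup>2 * sqrt (1 - u\<^sup>2)) / (a\<^sup>2 + (u\<^sup>2 - 2) * c\<^sup>2));
               R' = c * (c\<^sup>2 * u\<^sup>2 - a\<^sup>2) / (a\<^sup>2 + (u\<^sup>2 - 2) * c\<^sup>2)
           in on_circle C' \<bar>R'\<bar> (P1' a b u) \<and> on_circle C' \<bar>R'\<bar> (P2' a b u) \<and>
              on_circle C' \<bar>R'\<bar> (P3' a b u) \<and> on_circle C' \<bar>R'\<bar> (P4' a b u) \<and>
              on_circle C' \<bar>R'\<bar> (- c, 0) \<and> on_circle C' \<bar>R'\<bar> (c, 0)))"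
proof -
  have a: "a > 0" using assms by simp
  have b: "b > 0" using assms by simp
  have cc: "c\<^sup>2 = a\<^sup>2 - b\<^sup>2" unfolding c_def foc_def
    using assms(2,3) by (simp add: power_strict_mono less_imp_le)
  have c: "c > 0" unfolding c_def foc_def using assms(2,3) by (simp add: power_strict_mono)
  have "sqrt 2 * b < a" using assms(3,4) b by (simp add: field_simps)
  then have "(sqrt 2 * b)\<^sup>2 < a\<^sup>2" using b by (intro power_strict_mono) auto
  then have A2B: "a\<^sup>2 - 2 * b\<^sup>2 > 0" by (simp add: power_mult_distrib)
  have "\<bar>u\<bar> < a / c\<^sup>2 * sqrt (a\<^sup>2 - 2 * b\<^sup>2)" using assms(5) unfolding umax_def c_def .
  then have "\<bar>u\<bar>\<^sup>2 < (a / c\<^sup>2 * sqrt (a\<^sup>2 - 2 * b\<^sup>2))\<^sup>2" by (intro power_strict_mono) auto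
  then have "u\<^sup>2 < a\<^sup>2 * (a\<^sup>2 - 2 * b\<^sup>2) / c^4" using A2B by (simp add: power_mult_distrib power_divide)
  then have uW: "c^4 * u\<^sup>2 < a\<^sup>2 * (a\<^sup>2 - 2 * b\<^sup>2)" using c by (simp add: field_simps)
  have "a\<^sup>2 * (a\<^sup>2 - 2 * b\<^sup>2) = c^4 - b^4"
  proof -
    have "a\<^sup>2 = c\<^sup>2 + b\<^sup>2" using cc by simp
    then show ?thesis by (simp add: algebra_simps power2_eq_square power4_eq_xxxx)
  qed
  then have "c^4 * u\<^sup>2 < c^4" using uW b by (smt (verit) zero_less_power)
  then have u1: "u\<^sup>2 < 1" using c by simp
  define s where "s = sqrt (1 - u\<^sup>2)"
  have s: "s > 0" unfolding s_def using u1 by simp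
  have ss: "s\<^sup>2 = 1 - u\<^sup>2" unfolding s_def using u1 by simp
  define w where "w = sqrt (a\<^sup>2 * (a\<^sup>2 - 2 * b\<^sup>2) - c^4 * u\<^sup>2)"
  have ww0: "w\<^sup>2 = a\<^sup>2 * (a\<^sup>2 - 2 * b\<^sup>2) - c^4 * u\<^sup>2" unfolding w_def using uW by simp
  have ww: "w\<^sup>2 = c^4 * s\<^sup>2 - b^4" using ww0 ss cc by algebra
  have fc: "foc a b = c" unfolding c_def ..
  have sw: "sqrt (1 - u\<^sup>2) = s" "sqrt (a\<^sup>2 * (a\<^sup>2 - 2 * b\<^sup>2) - c^4 * u\<^sup>2) = w"
    unfolding s_def w_def by auto
  have P1e: "P1 a b u = (a * u, b * s)" unfolding P1_def sw ..
  have P3e: "P3 a b u = (a * (- u), b * s)" unfolding P3_def sw by simp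
  have P2e: "P2 a b u = (- (a * w) / (c\<^sup>2 * s), - (b^3) / (c\<^sup>2 * s))"
    unfolding P2_def Let_def fc sw ..
  have P4e: "P4 a b u = (- (a * (-w)) / (c\<^sup>2 * s), - (b^3) / (c\<^sup>2 * s))"
    unfolding P4_def Let_def fc sw by simp
  define Y1 where "Y1 = (c\<^sup>2 * u\<^sup>2 - a\<^sup>2 + 2 * b\<^sup>2) / (2 * b * s)"
  define R where "R = (a\<^sup>2 - c\<^sup>2 * u\<^sup>2) / (2 * b * s)"
  have part1: "on_circle (0, Y1) R (P1 a b u) \<and> on_circle (0, Y1) R (P2 a b u) \<and>
             on_circle (0, Y1) R (P3 a b u) \<and> on_circle (0, Y1) R (P4 a b u) \<and>
             on_circle (0, Y1) R (- c, 0) \<and> on_circle (0, Y1) R (c, 0)"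
  proof -
    have q1: "(a * u)\<^sup>2 + (b * s - Y1)\<^sup>2 = R\<^sup>2"
      unfolding Y1_def R_def using b s
      apply (simp add: field_simps)
      using ss cc by algebra
    have q2: "(a * w / (c\<^sup>2 * s))\<^sup>2 + (- (b^3) / (c\<^sup>2 * s) - Y1)\<^sup>2 = R\<^sup>2"
      unfolding Y1_def R_def using b s c
      apply (simp add: field_simps)
      using ss cc ww by algebra
    have q3: "c\<^sup>2 + Y1\<^sup>2 = R\<^sup>2"
      unfolding Y1_def R_def using b s c
      apply (simp add: field_simps)
      using ss cc by algebra
    show ?thesis unfolding on_circle_def P1e P2e P3e P4e using q1 q2 q3
      by (simp add: power2_eq_square)
  qed
  have part2: "a\<^sup>2 + (u\<^sup>2 - 2) * c\<^sup>2 \<noteq> 0 \<Longrightarrow>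
     (let C' = (0, - (2 * b * c\<^sup>2 * sqrt (1 - u\<^sup>2)) / (a\<^sup>2 + (u\<^sup>2 - 2) * c\<^sup>2));
               R' = c * (c\<^sup>2 * u\<^sup>2 - a\<^sup>2) / (a\<^sup>2 + (u\<^sup>2 - 2) * c\<^sup>2)
           in on_circle C' \<bar>R'\<bar> (P1' a b u) \<and> on_circle C' \<bar>R'\<bar> (P2' a b u) \<and>
              on_circle C' \<bar>R'\<bar> (P3' a b u) \<and> on_circle C' \<bar>R'\<bar> (P4' a b u) \<and>
              on_circle C' \<bar>R'\<bar> (- c, 0) \<and> on_circle C' \<bar>R'\<bar> (c, 0))"
  proof -
    assume H: "a\<^sup>2 + (u\<^sup>2 - 2) * c\<^sup>2 \<noteq> 0"
    have DD: "a\<^sup>2 + (u\<^sup>2 - 2) * c\<^sup>2 = b\<^sup>2 - c\<^sup>2 * s\<^sup>2" using cc ss by algebra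
    have D: "b\<^sup>2 - c\<^sup>2 * s\<^sup>2 \<noteq> 0" using H DD by simp
    have ss': "s\<^sup>2 = 1 - (-u)\<^sup>2" using ss by simp
    have ww': "(-w)\<^sup>2 = c^4 * s\<^sup>2 - b^4" using ww by simp
    define Y0 where "Y0 = - (2 * b * c\<^sup>2 * s) / (a\<^sup>2 + (u\<^sup>2 - 2) * c\<^sup>2)"
    define R' where "R' = c * (c\<^sup>2 * u\<^sup>2 - a\<^sup>2) / (a\<^sup>2 + (u\<^sup>2 - 2) * c\<^sup>2)"
    have g1: "on_circle (0, Y0) \<bar>R'\<bar> (P1' a b u)"
      unfolding P1'_def P1e P2e meet_gen[OF a b c cc s ss ww D] Y0_def R'_def
      by (rule circ_gen[OF a b c cc s ss ww D])
    have g4: "on_circle (0, Y0) \<bar>R'\<bar> (P4' a b u)"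
      unfolding P4'_def P1e P4e Y0_def R'_def
      apply (subst tangent_meet_sym)
      unfolding meet_gen[OF a b c cc s ss ww' D]
      by (rule circ_gen[OF a b c cc s ss ww' D])
    have g2: "on_circle (0, Y0) \<bar>R'\<bar> (P2' a b u)"
      using circ_gen[OF a b c cc s ss' ww D]
      unfolding P2'_def P3e P2e Y0_def R'_def
      apply (subst tangent_meet_sym)
      unfolding meet_gen[OF a b c cc s ss' ww D]
      by simp
    have g3: "on_circle (0, Y0) \<bar>R'\<bar> (P3' a b u)"
      using circ_gen[OF a b c cc s ss' ww' D]
      unfolding P3'_def P3e P4e meet_gen[OF a b c cc s ss' ww' D] Y0_def R'_def
      by simp
    have q: "c\<^sup>2 + Y0\<^sup>2 = R'\<^sup>2"
      unfolding Y0_def R'_def DD using b s c D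
      apply (simp add: field_simps)
      using ss cc by algebra
    have g5: "on_circle (0, Y0) \<bar>R'\<bar> (- c, 0) \<and> on_circle (0, Y0) \<bar>R'\<bar> (c, 0)"
      unfolding on_circle_def using q by simp
    show ?thesis unfolding Let_def sw(1) using g1 g2 g3 g4 g5 unfolding Y0_def R'_def by simp
  qed
  show ?thesis using part1 part2 unfolding Let_def sw(1) Y1_def R_def by simp
qed

end
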